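(* Let $d\ge2$, $\nu=e^{2\pi i/d}$, and $0<r\le1$. Let $p\in\mathcal P_d$, $p(z)=\sum_{j=0}^{d-1}c_jz^j$, and suppose there exists $z_0$ with $|z_0|=1$ such that $|\nu^jz_0-w|\ge r$ for every $j\in\{1,\dots,d\}$ and every root $w$ of every nonzero truncation of $p$. Then for all $j\in\{1,\dots,d\}$, $$|p(\nu^jz_0)|\ge\frac{r^{\frac{(d-1)d}{2}}\left(\frac{d-1}{2d}\right)^d\frac{2}{d-1}}{\prod_{k=0}^{d-1}(r^k+1)}\,\|\hat p\|_1,$$ where $\|\hat p\|_1=\sum_{j=0}^{d-1}|c_j|$.
   Context: $\mathcal P_d$ is the space of complex polynomials of degree at most $d-1$. For $p(z)=\sum_{j=0}^{d-1}c_jz^j$ and $n\in\{1,\dots,d\}$, the $n$-th truncation of $p$ is $p_n(z)=\sum_{j=0}^{n-1}c_jz^j$. *)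

theory Defs
  imports "HOL-Analysis.Analysis"
begin

text \<open>A polynomial in P_d is represented by its coefficient sequence c, of which only
  c 0, ..., c (d-1) are used.\<close>

definition poly_eval :: "nat \<Rightarrow> (nat \<Rightarrow> complex) \<Rightarrow> complex \<Rightarrow> complex" where
  "poly_eval d c z = (\<Sum>j<d. c j * z ^ j)"

definition trunc_eval :: "nat \<Rightarrow> (nat \<Rightarrow> complex) \<Rightarrow> complex \<Rightarrow> complex" where
  "trunc_eval n c z = (\<Sum>j<n. c j * z ^ j)"

definition trunc_nonzero :: "nat \<Rightarrow> (nat \<Rightarrow> complex) \<Rightarrow> bool" where
  "trunc_nonzero n c \<longleftrightarrow> (\<exists>j<n. c j \<noteq> 0)"

definition l1_coeff_norm :: "nat \<Rightarrow> (nat \<Rightarrow> complex) \<Rightarrow> real" where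
  "l1_coeff_norm d c = (\<Sum>j<d. cmod (c j))"

end

theory Submission
  imports Defs "HOL-Computational_Algebra.Fundamental_Theorem_Algebra"
begin

lemma root_bound:
  fixes q :: "complex poly" and r :: real
  assumes "\<And>w. poly q w = 0 \<Longrightarrow> r \<le> cmod (z - w)" "0 \<le> r"
  shows "cmod (lead_coeff q) * r ^ degree q \<le> cmod (poly q z)"
  using assms(1)
proof (induction "degree q" arbitrary: q)
  case 0
  then obtain a where "q = [:a:]" by (metis degree_eq_zeroE)
  then show ?case by simp
next
  case (Suc m)
  have "\<not> constant (poly q)" using Suc.hyps(2) constant_degree by (metis nat.distinct(1))
  then obtain w where w: "poly q w = 0" using fundamental_theorem_of_algebra by blast
  then obtain q' where q: "q = [:-w,1:] * q'" using poly_eq_0_iff_dvd by blast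
  have "q' \<noteq> 0" using q Suc.hyps(2) by auto
  have "degree ([:-w,1:]*q') = degree [:-w,1:] + degree q'" by (rule degree_mult_eq) (use \<open>q' \<noteq> 0\<close> in auto)
  then have dq: "degree q = Suc (degree q')" using q by simp
  have "lead_coeff ([:-w,1:]*q') = lead_coeff [:-w,1:] * lead_coeff q'" by (rule lead_coeff_mult)
  then have lc: "lead_coeff q = lead_coeff q'" using q by simp
  have IH: "cmod (lead_coeff q') * r ^ degree q' \<le> cmod (poly q' z)"
    apply (rule Suc.hyps(1))
    using dq Suc.hyps(2) apply simp
    using Suc.prems q by auto
  have rz: "r \<le> cmod (z - w)" using Suc.prems w by blast
  have "cmod (lead_coeff q) * r ^ degree q = r * (cmod (lead_coeff q') * r ^ degree q')"
    using dq lc by simp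
  also have "\<dots> \<le> cmod (z - w) * cmod (poly q' z)"
    using IH rz assms(2) by (intro mult_mono) auto
  also have "\<dots> = cmod (poly q z)" using q by (simp add: norm_mult[symmetric] left_diff_distrib)
  finally show ?case .
qed

fun K :: "real \<Rightarrow> nat \<Rightarrow> real" where
  "K r 0 = 1"
| "K r (Suc n) = r ^ n * K r n / (2 * (1 + r ^ n))"

lemma K_pos: "0 < r \<Longrightarrow> 0 < K r n"
  by (induction n) (auto intro!: divide_pos_pos mult_pos_pos add_pos_pos)

lemma K_le1: "0 < r \<Longrightarrow> r \<le> 1 \<Longrightarrow> K r n \<le> 1"
proof (induction n)
  case 0 then show ?case by simp
next
  case (Suc n)
  have a: "r ^ n \<le> 1" using Suc.prems by (simp add: power_le_one)
  have b: "0 \<le> r ^ n" using Suc.prems by simp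
  have "r ^ n * K r n \<le> 1 * 1" using a b Suc K_pos[of r n] by (intro mult_mono) auto
  also have "\<dots> \<le> 2 * (1 + r ^ n)" using b by simp
  finally show ?case using b by (simp add: divide_le_eq)
qed

lemma K_closed: "K r n = r ^ (n * (n - 1) div 2) / (2 ^ n * (\<Prod>k<n. 1 + r ^ k))"
proof (induction n)
  case 0 then show ?case by simp
next
  case (Suc n)
  have e: "Suc n * (Suc n - 1) div 2 = n * (n - 1) div 2 + n"
  proof (cases n)
    case 0 then show ?thesis by simp
  next
    case (Suc m)
    have "Suc n * n = n * (n - 1) + 2 * n" using Suc by simp
    then show ?thesis by simp
  qed
  show ?case unfolding K.simps Suc e by (simp add: power_add field_simps)
qed

lemma main_bound:
  fixes c :: "nat \<Rightarrow> complex" and z :: complex and r :: real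
  assumes "cmod z = 1" "0 < r" "r \<le> 1" "n \<le> d"
    and H: "\<forall>n\<in>{1..d}. \<forall>w. trunc_nonzero n c \<and> trunc_eval n c w = 0 \<longrightarrow> cmod (z - w) \<ge> r"
  shows "K r n * (\<Sum>j<n. cmod (c j)) \<le> cmod (trunc_eval n c z)"
  using assms(4)
proof (induction n)
  case 0 then show ?case by (simp add: trunc_eval_def)
next
  case (Suc n)
  define a where "a = cmod (c n)"
  define B where "B = (\<Sum>j<n. cmod (c j))"
  define P where "P = cmod (trunc_eval (Suc n) c z)"
  define Kn where "Kn = K r n"
  have IH: "Kn * B \<le> cmod (trunc_eval n c z)" using Suc unfolding Kn_def B_def by simp
  have zn: "cmod (z ^ n) = 1" using assms(1) by (simp add: norm_power)
  have split: "trunc_eval (Suc n) c z = trunc_eval n c z + c n * z ^ n"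
    by (simp add: trunc_eval_def)
  have P1: "Kn * B - a \<le> P"
  proof -
    have "trunc_eval n c z = trunc_eval (Suc n) c z - c n * z ^ n" using split by simp
    then have "cmod (trunc_eval n c z) \<le> P + a"
      unfolding P_def a_def using norm_triangle_ineq4 zn by (metis norm_mult mult.right_neutral)
    then show ?thesis using IH by simp
  qed
  have P2: "a * r ^ n \<le> P"
  proof (cases "c n = 0")
    case True then show ?thesis unfolding a_def P_def by simp
  next
    case False
    define q where "q = (\<Sum>i\<le>n. monom (c i) i)"
    have cq: "coeff q i = (if i \<le> n then c i else 0)" for i
      unfolding q_def by (simp add: coeff_sum coeff_monom)
    have "degree q \<le> n" by (rule degree_le) (simp add: cq)
    moreover have "n \<le> degree q" using False cq by (intro le_degree) simp
    ultimately have dq: "degree q = n" by simp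
    have pq: "poly q x = trunc_eval (Suc n) c x" for x
      unfolding q_def trunc_eval_def by (simp add: poly_sum poly_monom lessThan_Suc_atMost)
    have "cmod (lead_coeff q) * r ^ degree q \<le> cmod (poly q z)"
    proof (rule root_bound)
      fix w assume "poly q w = 0"
      moreover have "trunc_nonzero (Suc n) c" using False unfolding trunc_nonzero_def by auto
      moreover have "Suc n \<in> {1..d}" using Suc.prems by simp
      moreover have "trunc_eval (Suc n) c w = 0" using pq \<open>poly q w = 0\<close> by simp
      ultimately show "r \<le> cmod (z - w)" using H by blast
    qed (use assms in simp)
    then show ?thesis using dq cq pq unfolding a_def P_def by simp
  qed
  have Kpos: "0 < Kn" "Kn \<le> 1" unfolding Kn_def using K_pos K_le1 assms by auto
  have rn: "0 < r ^ n" using assms by simp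
  have a0: "0 \<le> a" "0 \<le> B" unfolding a_def B_def by (auto intro: sum_nonneg)
  have "(1 + r ^ n + Kn) * P \<ge> (1 + Kn) * (a * r ^ n) + r ^ n * (Kn * B - a)"
  proof -
    have "(1 + Kn) * (a * r ^ n) \<le> (1 + Kn) * P" using P2 Kpos by (intro mult_left_mono) auto
    moreover have "r ^ n * (Kn * B - a) \<le> r ^ n * P" using P1 rn by (intro mult_left_mono) auto
    ultimately show ?thesis by (simp add: algebra_simps)
  qed
  then have main: "r ^ n * Kn * (a + B) \<le> (1 + r ^ n + Kn) * P" by (simp add: algebra_simps)
  have P0: "0 \<le> P" unfolding P_def by simp
  have "K r (Suc n) * (a + B) = r ^ n * Kn * (a + B) / (2 * (1 + r ^ n))"
    unfolding Kn_def by simp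
  also have "\<dots> \<le> (1 + r ^ n + Kn) * P / (2 * (1 + r ^ n))"
    using main rn by (intro divide_right_mono) auto
  also have "\<dots> \<le> P"
  proof -
    have "(1 + r ^ n + Kn) * P \<le> (2 * (1 + r ^ n)) * P" using Kpos P0 rn
      by (intro mult_right_mono) auto
    then show ?thesis using rn by (simp add: divide_le_eq mult.commute)
  qed
  finally show ?case unfolding a_def B_def P_def by (simp add: add.commute)
qed

lemma Y_le:
  assumes "(d::nat) \<ge> 2"
  shows "((real d - 1) / real d) ^ d * (2 / (real d - 1)) \<le> 1"
proof (cases "d = 2")
  case True then show ?thesis by (simp add: power2_eq_square)
next
  case False
  then have d3: "real d \<ge> 3" using assms by simp
  have "((real d - 1) / real d) ^ d \<le> 1" using d3 by (intro power_le_one) auto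
  moreover have "2 / (real d - 1) \<le> 1" using d3 by simp
  moreover have "0 \<le> 2 / (real d - 1)" using d3 by simp
  ultimately show ?thesis using mult_mono[of _ 1 _ 1] by fastforce
qed

lemma const_le:
  assumes "(d::nat) \<ge> 2" "0 < r"
  shows "(r ^ ((d - 1) * d div 2) * ((real d - 1) / (2 * real d)) ^ d * (2 / (real d - 1)))
       / (\<Prod>k<d. r ^ k + 1) \<le> K r d"
proof -
  define Y where "Y = ((real d - 1) / real d) ^ d * (2 / (real d - 1))"
  define R where "R = r ^ ((d - 1) * d div 2)"
  define Q where "Q = (\<Prod>k<d. r ^ k + 1)"
  have Q0: "0 < Q" unfolding Q_def using assms by (intro prod_pos) (simp add: add_pos_nonneg)
  have R0: "0 \<le> R" unfolding R_def using assms by simp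
  have "((real d - 1) / (2 * real d)) ^ d = ((real d - 1) / real d) ^ d / 2 ^ d"
    by (simp add: power_divide power_mult_distrib)
  then have eq: "(r ^ ((d - 1) * d div 2) * ((real d - 1) / (2 * real d)) ^ d * (2 / (real d - 1)))
       / (\<Prod>k<d. r ^ k + 1) = R * Y / (2 ^ d * Q)"
    unfolding R_def Y_def Q_def by (simp add: mult_ac)
  have K: "K r d = R / (2 ^ d * Q)" unfolding K_closed R_def Q_def
    by (simp add: mult.commute add.commute)
  have "R * Y \<le> R * 1" using Y_le[OF assms(1)] R0 unfolding Y_def by (intro mult_left_mono) auto
  then show ?thesis unfolding eq K using Q0 by (intro divide_right_mono) auto
qed

theorem mainTheorem8:
  fixes d :: nat and r :: real and c :: "nat \<Rightarrow> complex" and z0 :: complex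
  defines "\<nu> \<equiv> exp (2 * pi * \<i> / of_nat d)"
  assumes "d \<ge> 2" and "0 < r" and "r \<le> 1"
    and "cmod z0 = 1"
    and "\<forall>j\<in>{1..d}. \<forall>n\<in>{1..d}. \<forall>w. trunc_nonzero n c \<and> trunc_eval n c w = 0
            \<longrightarrow> cmod (\<nu> ^ j * z0 - w) \<ge> r"
  shows "\<forall>j\<in>{1..d}. cmod (poly_eval d c (\<nu> ^ j * z0)) \<ge>
     (r ^ ((d - 1) * d div 2) * ((real d - 1) / (2 * real d)) ^ d * (2 / (real d - 1)))
       / (\<Prod>k<d. r ^ k + 1) * l1_coeff_norm d c"
proof
  fix j assume j: "j \<in> {1..d}"
  have nu: "cmod \<nu> = 1" unfolding \<nu>_def by (simp add: norm_exp_eq_Re)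
  have z: "cmod (\<nu> ^ j * z0) = 1" using nu assms(5) by (simp add: norm_mult norm_power)
  have mb: "K r d * (\<Sum>j<d. cmod (c j)) \<le> cmod (trunc_eval d c (\<nu> ^ j * z0))"
    by (rule main_bound[OF z assms(3,4) order.refl]) (use assms(6) j in blast)
  have L0: "0 \<le> l1_coeff_norm d c" unfolding l1_coeff_norm_def by (auto intro: sum_nonneg)
  have "(r ^ ((d - 1) * d div 2) * ((real d - 1) / (2 * real d)) ^ d * (2 / (real d - 1)))
       / (\<Prod>k<d. r ^ k + 1) * l1_coeff_norm d c \<le> K r d * l1_coeff_norm d c"
    using const_le[OF assms(2,3)] L0 by (rule mult_right_mono)
  also have "\<dots> \<le> cmod (poly_eval d c (\<nu> ^ j * z0))"
    using mb unfolding l1_coeff_norm_def poly_eval_def trunc_eval_def .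
  finally show "cmod (poly_eval d c (\<nu> ^ j * z0)) \<ge>
     (r ^ ((d - 1) * d div 2) * ((real d - 1) / (2 * real d)) ^ d * (2 / (real d - 1)))
       / (\<Prod>k<d. r ^ k + 1) * l1_coeff_norm d c" .
qed

end
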